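(* Let $n\in\mathbb{N}$ with $n\ge 2$, and let $\alpha:=\frac{n+\sqrt{n^2+4}}{2}$, $\gamma:=1/\alpha$, $\tau:=\log\alpha/\log n$. Then the number $\alpha-n=\frac{\sqrt{n^2+4}-n}{2}\in(0,1)$ is an isolated point of $D_{\gamma,\tau}\cap[0,1]$.
   Context: For $\gamma>0$ and $\tau\ge 1$, the Diophantine set $D_{\gamma,\tau}$ is the set of all real numbers $\xi$ such that $|\xi q-p|\ge \gamma/q^{\tau}$ for all $p\in\mathbb{Z}$ and all $q\in\mathbb{N}=\{1,2,3,\dots\}$. *)

theory Defs
  imports "HOL-Analysis.Analysis"
begin

definition diophantine_set :: "real \<Rightarrow> real \<Rightarrow> real set" where
  "diophantine_set \<gamma> \<tau> =
     {\<xi>. \<forall>p::int. \<forall>q::nat. q \<ge> 1 \<longrightarrow> \<bar>\<xi> * real q - real_of_int p\<bar> \<ge> \<gamma> / (real q powr \<tau>)}"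

end

theory Submission
  imports Defs
begin

lemma no_sol:
  fixes n :: int
  assumes n: "n \<ge> 1"
  shows "p \<ge> 1 \<Longrightarrow> q \<ge> 0 \<Longrightarrow> p^2 + n*p*q \<noteq> q^2"
proof (induction "nat q" arbitrary: p q rule: less_induct)
  case less
  show ?case
  proof
    assume eq: "p^2 + n*p*q = q^2"
    have pq0: "n*p*q \<ge> 0" using less.prems n by simp
    have "q \<noteq> 0"
    proof
      assume "q = 0"
      with eq have "p^2 = 0" by simp
      thus False using less.prems by simp
    qed
    hence q0: "q > 0" using less.prems by linarith
    have pp: "p*p > 0" using less.prems by simp
    have "q*q > (n*p)*q" using eq pp by (simp add: power2_eq_square algebra_simps)
    hence qnp: "q > n*p" using q0 by (simp add: mult_less_cancel_right)
    have "n*p \<ge> p" using n less.prems by (simp add: mult_le_cancel_right1)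
    hence pq: "p < q" using qnp by linarith
    have eq': "(q - n*p)^2 + n*p*(q - n*p) = p^2" using eq
      by (simp add: power2_eq_square algebra_simps)
    have "nat p < nat q" using pq less.prems by simp
    from less.hyps[OF this, of "q - n*p"] qnp less.prems eq'
    show False by (simp add: algebra_simps)
  qed
qed

theorem mainTheorem4:
  fixes n :: nat
  assumes "n \<ge> 2"
  defines "\<alpha> \<equiv> (real n + sqrt (real n ^ 2 + 4)) / 2"
  defines "\<gamma> \<equiv> 1 / \<alpha>"
  defines "\<tau> \<equiv> ln \<alpha> / ln (real n)"
  shows "\<alpha> - real n \<in> diophantine_set \<gamma> \<tau> \<inter> {0..1}
     \<and> \<not> ((\<alpha> - real n) islimpt (diophantine_set \<gamma> \<tau> \<inter> {0..1}))"
proof -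
  define s where "s = sqrt (real n ^ 2 + 4)"
  define b where "b = \<alpha> - real n"
  have s2: "s^2 = real n^2 + 4" unfolding s_def by simp
  have s0: "s \<ge> 0" unfolding s_def by simp
  have n2: "real n \<ge> 2" using assms(1) by simp
  have sn: "s > real n" unfolding s_def
    using real_sqrt_less_mono[of "real n^2" "real n^2+4"] by simp
  have al: "\<alpha> = (real n + s)/2" unfolding \<alpha>_def s_def by simp
  have bdef: "b = (s - real n)/2" unfolding b_def al by simp
  have ab: "\<alpha> * b = 1" unfolding al bdef using s2
    by (simp add: field_simps power2_eq_square)
  have b0: "b > 0" using bdef sn by simp
  have an: "\<alpha> > real n" using al sn by simp
  have anb: "\<alpha> = real n + b" unfolding b_def by simp
  have g: "\<gamma> = b" unfolding \<gamma>_def using ab an n2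
    by (simp add: field_simps)
  have nb: "real n * b = 1 - b^2" using ab anb by (simp add: algebra_simps power2_eq_square)
  have nb1: "real n * b < 1" using nb b0 by simp
  have "b * 1 \<le> b * real n" using n2 b0 by (intro mult_left_mono) auto
  hence b1: "b < 1" using nb1 by (simp add: mult.commute)
  have lnn: "ln (real n) > 0" using n2 by simp
  have npow: "real n powr \<tau> = \<alpha>"
    unfolding \<tau>_def powr_def using lnn an n2 by simp
  have tau1: "\<tau> \<ge> 1" unfolding \<tau>_def using lnn an n2 by simp
  have powr_ge1: "real q powr \<tau> \<ge> 1" if "q \<ge> 1" for q :: nat
    using that tau1 by (simp add: ge_one_powr_ge_zero)
  have key: "real q powr \<tau> * real n \<ge> real q * \<alpha>" if "q \<ge> n" for q :: nat
  proof -
    have q0: "real q > 0" using that assms(1) by simp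
    have "real q powr \<tau> = real q * real q powr (\<tau> - 1)"
      using q0 by (simp add: powr_diff)
    moreover have "real q powr (\<tau> - 1) \<ge> real n powr (\<tau> - 1)"
      using that tau1 by (intro powr_mono2) auto
    moreover have "real n powr (\<tau> - 1) = \<alpha> / real n"
      using npow n2 by (simp add: powr_diff)
    ultimately have "real q powr \<tau> \<ge> real q * (\<alpha> / real n)"
      using q0 mult_left_mono[of "\<alpha> / real n" "real q powr (\<tau> - 1)" "real q"] by simp
    thus ?thesis using n2 by (simp add: field_simps)
  qed
  have mem: "b / (real q powr \<tau>) \<le> \<bar>b * real q - real_of_int p\<bar>" if q1: "q \<ge> 1" for p :: int and q :: nat
  proof (rule ccontr)
    define Q where "Q = real q"
    define P where "P = real_of_int p"
    define \<delta> where "\<delta> = \<bar>b * Q - P\<bar>"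
    assume "\<not> ?thesis"
    hence dl: "\<delta> < b / (Q powr \<tau>)" unfolding \<delta>_def Q_def P_def by simp
    have Qp: "Q powr \<tau> \<ge> 1" unfolding Q_def using powr_ge1 q1 by simp
    have db: "\<delta> < b" using dl Qp b0
    proof -
      have "b / (Q powr \<tau>) \<le> b" using Qp b0 by (simp add: divide_le_eq mult_le_cancel_left1)
      thus ?thesis using dl by linarith
    qed
    show False
    proof (cases "q < n")
      case True
      have "\<delta> \<ge> b"
      proof (cases "p \<le> 0")
        case True
        have "b * 1 \<le> b * Q" unfolding Q_def using q1 b0 by (intro mult_left_mono) auto
        moreover have "P \<le> 0" unfolding P_def using True by simp
        ultimately have "b * Q - P \<ge> b" by simp
        thus ?thesis unfolding \<delta>_def by simp
      next
        case False
        hence "P \<ge> 1" unfolding P_def by simp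
        moreover have "Q \<le> real n - 1" unfolding Q_def using \<open>q < n\<close> by linarith
        moreover have "b * Q \<le> b * (real n - 1)" using calculation b0 by simp
        ultimately have "P - b * Q \<ge> b" using nb1 by (simp add: algebra_simps)
        thus ?thesis unfolding \<delta>_def by simp
      qed
      thus False using db by simp
    next
      case False
      hence qn: "q \<ge> n" by simp
      have Q2: "Q \<ge> real n" unfolding Q_def using qn by simp
      have "P > b * Q - b" using db unfolding \<delta>_def by simp
      moreover have "b * Q - b \<ge> 0" using b0 q1 unfolding Q_def by simp
      ultimately have "P > 0" by simp
      hence p1: "p \<ge> 1" unfolding P_def by simp
      have N: "p^2 + int n * p * int q \<noteq> (int q)^2"
        using no_sol[of "int n" p "int q"] assms(1) p1 by simp
      have "(b*Q - P) * (\<alpha>*Q + P) = Q^2*(\<alpha>*b) - (\<alpha> - b)*P*Q - P^2"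
        by (simp add: algebra_simps power2_eq_square)
      hence ident: "(b*Q - P) * (\<alpha>*Q + P) = Q^2 - real n * P * Q - P^2"
        using ab anb by simp
      have "Q^2 - real n * P * Q - P^2 = of_int ((int q)^2 - int n * p * int q - p^2)"
        unfolding Q_def P_def by simp
      moreover have "\<bar>(int q)^2 - int n * p * int q - p^2\<bar> \<ge> 1" using N by linarith
      ultimately have N1: "\<bar>Q^2 - real n * P * Q - P^2\<bar> \<ge> 1"
        by (metis of_int_1_le_iff of_int_abs)
      have "\<alpha>*Q > 0" using an n2 Q2 by (intro mult_pos_pos) auto
      hence pos: "\<alpha>*Q + P > 0" using \<open>P > 0\<close> by linarith
      have one: "1 \<le> \<delta> * (\<alpha>*Q + P)"
      proof -
        have "\<delta> * (\<alpha>*Q + P) = \<bar>(b*Q - P) * (\<alpha>*Q + P)\<bar>"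
          using pos unfolding \<delta>_def by (simp add: abs_mult)
        thus ?thesis using N1 ident by simp
      qed
      have Qt0: "Q powr \<tau> > 0" using Qp by linarith
      have "\<delta> * (\<alpha>*Q + P) < b / (Q powr \<tau>) * (\<alpha>*Q + P)"
        using mult_strict_right_mono[OF dl pos] by simp
      hence A1: "\<delta> * (\<alpha>*Q + P) * Q powr \<tau> < b * (\<alpha>*Q + P)" using Qt0
        by (simp add: field_simps)
      have A2: "Q powr \<tau> \<le> \<delta> * (\<alpha>*Q + P) * Q powr \<tau>"
        using mult_right_mono[OF one, of "Q powr \<tau>"] Qt0 by simp
      have A: "Q powr \<tau> < b * (\<alpha>*Q + P)" using A1 A2 by linarith
      have "P \<le> b*Q + \<delta>" unfolding \<delta>_def by simp
      hence B1: "b*P \<le> b*(b*Q + \<delta>)" using b0 by (intro mult_left_mono) auto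
      have B2: "b*(\<alpha>*Q+P) = (\<alpha>*b)*Q + b*P" by (simp add: algebra_simps)
      have B3: "b*(b*Q + \<delta>) = b*b*Q + b*\<delta>" by (simp add: algebra_simps)
      have B: "Q powr \<tau> < Q + b*b*Q + b * \<delta>" using A B1 B2 B3 ab by simp
      have K: "Q powr \<tau> * real n \<ge> Q * \<alpha>" unfolding Q_def using key qn by simp
      have "Q powr \<tau> * real n < (Q + b*b*Q + b * \<delta>) * real n"
        using B n2 by (intro mult_strict_right_mono) auto
      moreover have "(Q + b*b*Q + b * \<delta>) * real n = real n * Q + real n * b*b*Q + real n * b * \<delta>"
        by (simp add: algebra_simps)
      ultimately have "Q * \<alpha> < real n * Q + real n * b*b*Q + real n * b * \<delta>"
        using K by linarith
      hence "Q * b < real n * b*b*Q + real n * b * \<delta>" using anb by (simp add: algebra_simps)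
      moreover have "real n * b*b*Q + real n * b * \<delta> = b * (real n * b * Q + real n * \<delta>)"
        by (simp add: algebra_simps)
      ultimately have "b * Q < b * (real n * b * Q + real n * \<delta>)" by (simp add: mult.commute)
      hence "Q < real n * b * Q + real n * \<delta>" using b0 by simp
      moreover have nbQ: "real n * b * Q = Q - Q*b^2"
        proof -
          have "real n * b * Q = (1 - b^2) * Q" using nb by simp
          thus ?thesis by (simp add: algebra_simps)
        qed
      ultimately have C: "Q * b^2 < real n * \<delta>" by linarith
      have D: "\<delta> * Q powr \<tau> < b" using dl Qt0 by (simp add: field_simps)
      have "Q * b^2 * Q powr \<tau> < real n * \<delta> * Q powr \<tau>" using C Qt0 by simp
      also have "\<dots> < real n * b" using D n2 by (simp add: mult.assoc)
      finally have E: "Q * b * Q powr \<tau> < real n" using b0 by (simp add: power2_eq_square mult.assoc mult.commute mult.left_commute)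
      have "Q * Q powr \<tau> * real n \<ge> Q * (Q * \<alpha>)" using K Q2 n2 by (simp add: mult.assoc)
      also have "Q * (Q * \<alpha>) \<ge> real n * (real n * \<alpha>)" using Q2 an n2
        by (intro mult_mono) auto
      finally have "Q * Q powr \<tau> \<ge> real n * \<alpha>" using n2 by (simp add: mult.assoc)
      hence "Q * Q powr \<tau> * b \<ge> real n * \<alpha> * b" using b0 by (intro mult_right_mono) auto
      hence "Q * Q powr \<tau> * b \<ge> real n" using ab by (simp add: mult.assoc)
      thus False using E by (simp add: mult.commute mult.left_commute)
    qed
  qed
  have inD: "b \<in> diophantine_set \<gamma> \<tau>"
    unfolding diophantine_set_def g using mem by simp
  have iso: "\<not> (b islimpt (diophantine_set \<gamma> \<tau> \<inter> {0..1}))"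
  proof
    assume "b islimpt (diophantine_set \<gamma> \<tau> \<inter> {0..1})"
    moreover have e: "b^2 / real n > 0" using b0 n2 by simp
    ultimately obtain x where x: "x \<in> diophantine_set \<gamma> \<tau> \<inter> {0..1}" "x \<noteq> b" "dist x b < b^2 / real n"
      unfolding islimpt_approachable by blast
    have xD: "\<And>p q. q \<ge> 1 \<Longrightarrow> b / (real q powr \<tau>) \<le> \<bar>x * real q - real_of_int p\<bar>"
      using x(1) unfolding diophantine_set_def g by auto
    show False
    proof (cases "x < b")
      case True
      have "b / (real 1 powr \<tau>) \<le> \<bar>x * real 1 - real_of_int 0\<bar>" using xD[of 1 0] by simp
      thus False using True x(1) by simp
    next
      case False
      hence xb: "x > b" using x(2) by simp
      have d: "real n * (x - b) < b^2" using x(3) xb n2 by (simp add: dist_real_def field_simps)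
      have "b / (real n powr \<tau>) \<le> \<bar>x * real n - real_of_int 1\<bar>" using xD[of n 1] assms(1) by simp
      moreover have "b / (real n powr \<tau>) = b^2" using npow ab an n2 by (simp add: field_simps power2_eq_square)
      moreover have "x * real n - 1 = real n * (x - b) - b^2" using nb by (simp add: algebra_simps)
      moreover have "real n * (x - b) > 0" using xb n2 by simp
      ultimately show False using d by simp
    qed
  qed
  have "b \<in> {0..1}" using b0 b1 by simp
  thus ?thesis using inD iso unfolding b_def by simp
qed

end
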